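(* Let $G$ be a finite abelian group, $T \subsetneq G$ a non-empty subset, and fix $x \in G$ with $T + x \ne T$. Put $T^{\uparrow} = T + x$, $C^{\uparrow} = T^{\uparrow}\setminus T$, $C^{\downarrow} = T \setminus T^{\uparrow}$ and $A = T \cup T^{\uparrow}$. Let $d \ge 1$ and let $X$ be a hole in $A^d$. Suppose that $C_{i,d} \subset X$ for some $0 \le i \le d$. Then $(X \setminus C_{i,d})^{\dagger}$ is a hole in $A^{d+1}$.
   Context: For integers $1 \le i \le e$, $C_{i,e} = C^{\downarrow}\times\dots\times C^{\uparrow}\times\dots\times C^{\downarrow} \subset A^e$ ($e$ factors, $C^{\uparrow}$ in the $i$-th factor, $C^{\downarrow}$ elsewhere), and $C_{0,e} = (C^{\downarrow})^e$. A copy of $T$ in $G^e$ is a translate $\mathsf{T}_j + y$ ($y\in G^e$, $1\le j\le e$), where $\mathsf{T}_j$ is the set of points of $G^e$ with $j$-th coordinate in $T$ and other coordinates $0$; a set is $T$-tilable if it is a disjoint union of copies of $T$. A set $X \subset A^e$ is a hole in $A^e$ if $A^e \setminus X$ is $T$-tilable. For $X \subset A^e$, define $X^{\dagger} = (X \times C^{\downarrow}) \cup C_{e+1,e+1} \subset A^{e+1}$. *)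

theory Defs
  imports "HOL-Library.Disjoint_Sets"
begin

(* Points of G^e are lists of length e; coordinate j (1-based in the paper) is index j-1. *)

definition Tup :: "'a::ab_group_add set \<Rightarrow> 'a \<Rightarrow> 'a set" where
  "Tup T x = (\<lambda>t. t + x) ` T"

definition Cup :: "'a::ab_group_add set \<Rightarrow> 'a \<Rightarrow> 'a set" where
  "Cup T x = Tup T x - T"

definition Cdown :: "'a::ab_group_add set \<Rightarrow> 'a \<Rightarrow> 'a set" where
  "Cdown T x = T - Tup T x"

definition Aset :: "'a::ab_group_add set \<Rightarrow> 'a \<Rightarrow> 'a set" where
  "Aset T x = T \<union> Tup T x"

definition power_set :: "'a set \<Rightarrow> nat \<Rightarrow> 'a list set" where
  "power_set S e = {xs. length xs = e \<and> set xs \<subseteq> S}"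

(* C_{i,e}: C^up in the i-th factor (1 \<le> i \<le> e), C^down elsewhere; i = 0 gives (C^down)^e *)
definition Cset :: "'a::ab_group_add set \<Rightarrow> 'a \<Rightarrow> nat \<Rightarrow> nat \<Rightarrow> 'a list set" where
  "Cset T x e i = {xs. length xs = e \<and>
      (\<forall>k<e. xs ! k \<in> (if Suc k = i then Cup T x else Cdown T x))}"

definition tcopy :: "'a::ab_group_add set \<Rightarrow> nat \<Rightarrow> nat \<Rightarrow> 'a list \<Rightarrow> 'a list set" where
  "tcopy T e j y = {map2 (+) y ((replicate e 0)[j - 1 := t]) | t. t \<in> T}"

definition copies :: "'a::ab_group_add set \<Rightarrow> nat \<Rightarrow> 'a list set set" where
  "copies T e = {tcopy T e j y | j y. 1 \<le> j \<and> j \<le> e \<and> length y = e}"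

definition tilable :: "'a::ab_group_add set \<Rightarrow> nat \<Rightarrow> 'a list set \<Rightarrow> bool" where
  "tilable T e S \<longleftrightarrow> (\<exists>P. P \<subseteq> copies T e \<and> disjoint P \<and> \<Union>P = S)"

definition hole :: "'a::ab_group_add set \<Rightarrow> 'a \<Rightarrow> nat \<Rightarrow> 'a list set \<Rightarrow> bool" where
  "hole T x e X \<longleftrightarrow> X \<subseteq> power_set (Aset T x) e \<and>
      tilable T e (power_set (Aset T x) e - X)"

definition dagger :: "'a::ab_group_add set \<Rightarrow> 'a \<Rightarrow> nat \<Rightarrow> 'a list set \<Rightarrow> 'a list set" where
  "dagger T x e X = {xs @ [c] | xs c. xs \<in> X \<and> c \<in> Cdown T x} \<union> Cset T x (Suc e) (Suc e)"

end

theory Submission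
  imports Defs
begin

definition ext :: "'a list set \<Rightarrow> 'a set \<Rightarrow> 'a list set" where
  "ext S B = {p @ [a] | p a. p \<in> S \<and> a \<in> B}"

lemma mem_ext: "xs \<in> ext S B \<longleftrightarrow> xs \<noteq> [] \<and> butlast xs \<in> S \<and> last xs \<in> B"
  unfolding ext_def
proof (cases xs rule: rev_cases)
qed auto

lemma tilable_empty: "tilable T e {}"
  unfolding tilable_def by (rule exI[of _ "{}"]) (auto simp: disjoint_def)

lemma tilable_UN:
  assumes "\<forall>i\<in>I. tilable T e (S i)"
    and "\<forall>i\<in>I. \<forall>j\<in>I. i \<noteq> j \<longrightarrow> S i \<inter> S j = {}"
  shows "tilable T e (\<Union>i\<in>I. S i)"
proof -
  from assms(1) have "\<forall>i\<in>I. \<exists>Q. Q \<subseteq> copies T e \<and> disjoint Q \<and> \<Union>Q = S i"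
    unfolding tilable_def .
  then obtain P where P: "\<forall>i\<in>I. P i \<subseteq> copies T e \<and> disjoint (P i) \<and> \<Union>(P i) = S i"
    by (rule bchoice[THEN exE]) blast
  show ?thesis unfolding tilable_def
  proof (intro exI[of _ "\<Union>i\<in>I. P i"] conjI)
    show "(\<Union>i\<in>I. P i) \<subseteq> copies T e" using P by auto
    have "\<Union>(\<Union>i\<in>I. P i) = (\<Union>i\<in>I. \<Union>(P i))" by auto
    also have "\<dots> = (\<Union>i\<in>I. S i)" using P by auto
    finally show "\<Union>(\<Union>i\<in>I. P i) = (\<Union>i\<in>I. S i)" .
    show "disjoint (\<Union>i\<in>I. P i)"
      unfolding disjoint_def pairwise_def disjnt_def
    proof (intro ballI impI)
      fix a b assume a: "a \<in> (\<Union>i\<in>I. P i)" and b: "b \<in> (\<Union>i\<in>I. P i)" and ab: "a \<noteq> b"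
      then obtain i j where i: "i \<in> I" "a \<in> P i" and j: "j \<in> I" "b \<in> P j" by blast
      show "a \<inter> b = {}"
      proof (cases "i = j")
        case True
        then have "disjoint (P i)" "b \<in> P i" using P i j by auto
        then show ?thesis using i(2) ab unfolding disjoint_def pairwise_def disjnt_def by blast
      next
        case False
        then have "S i \<inter> S j = {}" using assms(2) i j by blast
        moreover have "a \<subseteq> S i" "b \<subseteq> S j" using P i j by auto
        ultimately show ?thesis by blast
      qed
    qed
  qed
qed

lemma tilable_Un:
  assumes "tilable T e A" "tilable T e B" "A \<inter> B = {}"
  shows "tilable T e (A \<union> B)"
proof -
  have "tilable T e (\<Union>i\<in>{True,False}. if i then A else B)"
    by (rule tilable_UN) (use assms in auto)
  then show ?thesis by (simp add: Un_commute)
qed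

lemma map2_snoc: "length xs = length ys \<Longrightarrow> map2 f (xs @ [a]) (ys @ [b]) = map2 f xs ys @ [f a b]"
  by simp

lemma map2_zero: "map2 (+) p (replicate (length p) (0::'a::monoid_add)) = p"
  by (induction p) auto

lemma tcopy_snoc:
  assumes "1 \<le> j" "j \<le> d" "length y = d"
  shows "(\<lambda>p. p @ [a]) ` tcopy T d j y = tcopy T (Suc d) j (y @ [a])"
proof -
  have "map2 (+) (y @ [a]) ((replicate (Suc d) 0)[j - 1 := t]) =
        map2 (+) y ((replicate d 0)[j - 1 := t]) @ [a]" for t
  proof -
    have r: "replicate (Suc d) (0::'a) = replicate d 0 @ [0]" by (simp add: replicate_append_same)
    have "(replicate (Suc d) 0)[j - 1 := t] = (replicate d 0)[j - 1 := t] @ [0]"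
      unfolding r using assms by (subst list_update_append) auto
    then show ?thesis using assms by (simp add: map2_snoc)
  qed
  then show ?thesis unfolding tcopy_def by auto
qed

lemma tcopy_last:
  assumes "length p = d"
  shows "tcopy T (Suc d) (Suc d) (p @ [g]) = ext {p} ((\<lambda>t. t + g) ` T)"
proof -
  have "map2 (+) (p @ [g]) ((replicate (Suc d) 0)[d := t]) = p @ [t + g]" for t
  proof -
    have r: "replicate (Suc d) (0::'a) = replicate d 0 @ [0]" by (simp add: replicate_append_same)
    have "(replicate (Suc d) 0)[d := t] = replicate d 0 @ [t]"
      unfolding r by (simp add: list_update_append)
    then show ?thesis using assms map2_zero[of p] by (simp add: map2_snoc add.commute)
  qed
  then show ?thesis unfolding tcopy_def ext_def by auto
qed

lemma ext_layer1:
  assumes "tilable T d S"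
  shows "tilable T (Suc d) (ext S {a})"
proof -
  obtain P where P: "P \<subseteq> copies T d" "disjoint P" "\<Union>P = S"
    using assms unfolding tilable_def by blast
  let ?f = "\<lambda>p. p @ [a]"
  have inj: "inj ?f" by (auto simp: inj_def)
  show ?thesis unfolding tilable_def
  proof (intro exI[of _ "(\<lambda>c. ?f ` c) ` P"] conjI)
    show "(\<lambda>c. ?f ` c) ` P \<subseteq> copies T (Suc d)"
    proof
      fix c' assume "c' \<in> (\<lambda>c. ?f ` c) ` P"
      then obtain c where c: "c \<in> P" "c' = ?f ` c" by blast
      then obtain j y where "c = tcopy T d j y" "1 \<le> j" "j \<le> d" "length y = d"
        using P(1) unfolding copies_def by blast
      then have "c' = tcopy T (Suc d) j (y @ [a])" using c tcopy_snoc by metis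
      then show "c' \<in> copies T (Suc d)" unfolding copies_def using \<open>1 \<le> j\<close> \<open>j \<le> d\<close> \<open>length y = d\<close>
        by fastforce
    qed
    show "disjoint ((\<lambda>c. ?f ` c) ` P)"
      unfolding disjoint_def pairwise_def disjnt_def
    proof (intro ballI impI)
      fix a' b' assume "a' \<in> (\<lambda>c. ?f ` c) ` P" "b' \<in> (\<lambda>c. ?f ` c) ` P" "a' \<noteq> b'"
      then obtain a b where "a \<in> P" "b \<in> P" "a' = ?f ` a" "b' = ?f ` b" "a \<noteq> b" by blast
      then have "a \<inter> b = {}" using P(2) unfolding disjoint_def pairwise_def disjnt_def by blast
      then show "a' \<inter> b' = {}" using \<open>a' = ?f ` a\<close> \<open>b' = ?f ` b\<close> by auto
    qed
    show "\<Union>((\<lambda>c. ?f ` c) ` P) = ext S {a}"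
      using P(3) unfolding ext_def by auto
  qed
qed

lemma ext_layer:
  assumes "tilable T d S"
  shows "tilable T (Suc d) (ext S B)"
proof -
  have "ext S B = (\<Union>a\<in>B. ext S {a})" unfolding ext_def by auto
  moreover have "tilable T (Suc d) (\<Union>a\<in>B. ext S {a})"
    by (rule tilable_UN) (auto simp: ext_layer1 assms mem_ext)
  ultimately show ?thesis by simp
qed

lemma ext_col:
  assumes "\<forall>p\<in>S. length p = d"
  shows "tilable T (Suc d) (ext S ((\<lambda>t. t + g) ` T))"
proof -
  have "ext S ((\<lambda>t. t + g) ` T) = (\<Union>p\<in>S. ext {p} ((\<lambda>t. t + g) ` T))" unfolding ext_def by auto
  moreover have "tilable T (Suc d) (\<Union>p\<in>S. ext {p} ((\<lambda>t. t + g) ` T))"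
  proof (rule tilable_UN)
    show "\<forall>i\<in>S. tilable T (Suc d) (ext {i} ((\<lambda>t. t + g) ` T))"
    proof
      fix p assume "p \<in> S"
      then have "ext {p} ((\<lambda>t. t + g) ` T) = tcopy T (Suc d) (Suc d) (p @ [g])"
        using tcopy_last assms by metis
      moreover have "tcopy T (Suc d) (Suc d) (p @ [g]) \<in> copies T (Suc d)"
        unfolding copies_def using assms \<open>p \<in> S\<close> by fastforce
      ultimately show "tilable T (Suc d) (ext {p} ((\<lambda>t. t + g) ` T))"
        unfolding tilable_def by (intro exI[of _ "{tcopy T (Suc d) (Suc d) (p @ [g])}"]) (auto simp: disjoint_def)
    qed
    show "\<forall>i\<in>S. \<forall>j\<in>S. i \<noteq> j \<longrightarrow> ext {i} ((\<lambda>t. t + g) ` T) \<inter> ext {j} ((\<lambda>t. t + g) ` T) = {}"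
      by (auto simp: mem_ext)
  qed
  ultimately show ?thesis by simp
qed

definition Pset :: "'a::ab_group_add set \<Rightarrow> 'a \<Rightarrow> nat \<Rightarrow> (nat \<Rightarrow> bool) \<Rightarrow> 'a list set" where
  "Pset T x e D = {xs. length xs = e \<and> (\<forall>k<e. xs ! k \<in> (if D k then Cup T x else Cdown T x))}"

lemma mem_power_set_Suc:
  "xs \<in> power_set S (Suc d) \<longleftrightarrow> xs \<noteq> [] \<and> butlast xs \<in> power_set S d \<and> last xs \<in> S"
  unfolding power_set_def
proof (cases xs rule: rev_cases)
qed auto

lemma nth_snoc_cases: "k < Suc d \<Longrightarrow> length p = d \<Longrightarrow> (p @ [a]) ! k = (if k < d then p ! k else a)"
  by (auto simp: nth_append)

lemma mem_Pset_Suc: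
  "xs \<in> Pset T x (Suc d) D \<longleftrightarrow> xs \<noteq> [] \<and> butlast xs \<in> Pset T x d D \<and>
     last xs \<in> (if D d then Cup T x else Cdown T x)"
proof (cases xs rule: rev_cases)
  case Nil
  then show ?thesis unfolding Pset_def by auto
next
  case (snoc p a)
  have "p @ [a] \<in> Pset T x (Suc d) D \<longleftrightarrow> p \<in> Pset T x d D \<and> a \<in> (if D d then Cup T x else Cdown T x)"
  proof
    assume H: "p @ [a] \<in> Pset T x (Suc d) D"
    then have l: "length p = d" unfolding Pset_def by auto
    have "\<forall>k<d. p ! k \<in> (if D k then Cup T x else Cdown T x)"
    proof (intro allI impI)
      fix k assume "k < d"
      then show "p ! k \<in> (if D k then Cup T x else Cdown T x)"
        using H l unfolding Pset_def by (auto simp: nth_append dest!: spec[of _ k])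
    qed
    moreover have "a \<in> (if D d then Cup T x else Cdown T x)"
      using H l unfolding Pset_def by (auto dest!: spec[of _ d])
    ultimately show "p \<in> Pset T x d D \<and> a \<in> (if D d then Cup T x else Cdown T x)"
      using l unfolding Pset_def by auto
  next
    assume "p \<in> Pset T x d D \<and> a \<in> (if D d then Cup T x else Cdown T x)"
    then show "p @ [a] \<in> Pset T x (Suc d) D"
      unfolding Pset_def by (auto simp: nth_append less_Suc_eq)
  qed
  then show ?thesis using snoc by simp
qed

lemma Pset_sub: "Pset T x d D \<subseteq> power_set (Aset T x) d"
  unfolding Pset_def power_set_def Aset_def Cup_def Cdown_def
  by (force simp: in_set_conv_nth split: if_splits)

lemma A_minus:
  "Aset T x - Cup T x = (\<lambda>t. t + 0) ` T"  "Aset T x - Cdown T x = (\<lambda>t. t + x) ` T"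
  unfolding Aset_def Cup_def Cdown_def Tup_def by auto

lemma Pset_hole:
  "tilable T d (power_set (Aset T x) d - Pset T x d D)"
proof (induction d)
  case 0
  have "power_set (Aset T x) 0 - Pset T x 0 D = {}"
    unfolding power_set_def Pset_def by auto
  then show ?case using tilable_empty by metis
next
  case (Suc d)
  have eq: "power_set (Aset T x) (Suc d) - Pset T x (Suc d) D =
     ext (power_set (Aset T x) d - Pset T x d D) (Aset T x) \<union>
     ext (Pset T x d D) (Aset T x - (if D d then Cup T x else Cdown T x))"
    using Pset_sub[of T x d D] unfolding Aset_def Cup_def Cdown_def
    by (auto simp: mem_ext mem_power_set_Suc mem_Pset_Suc Cup_def Cdown_def)
  have len: "\<forall>p\<in>Pset T x d D. length p = d" unfolding Pset_def by auto
  have t2: "tilable T (Suc d) (ext (Pset T x d D) (Aset T x - (if D d then Cup T x else Cdown T x)))"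
    using ext_col[OF len, of T 0] ext_col[OF len, of T x] A_minus[of T x] by (cases "D d") simp_all
  show ?case unfolding eq
    by (rule tilable_Un[OF ext_layer[OF Suc.IH] t2]) (auto simp: mem_ext)
qed

lemma Cset_Pset: "Cset T x d i = Pset T x d (\<lambda>k. Suc k = i)"
  unfolding Cset_def Pset_def by simp

lemma Cset_top: "Cset T x (Suc d) (Suc d) = ext (Cset T x d 0) (Cup T x)"
proof -
  have e: "Pset T x d (\<lambda>k. k = d) = Pset T x d (\<lambda>k. False)"
    unfolding Pset_def by auto
  show ?thesis unfolding Cset_Pset
    by (auto simp: mem_ext mem_Pset_Suc e)
qed

theorem proposition11:
  fixes T :: "'a::{ab_group_add, finite} set" and x :: 'a
    and d i :: nat and X :: "'a list set"
  assumes "T \<noteq> {}" and "T \<subset> UNIV"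
    and "Tup T x \<noteq> T"
    and "d \<ge> 1"
    and "hole T x d X"
    and "i \<le> d"
    and "Cset T x d i \<subseteq> X"
  shows "hole T x (Suc d) (dagger T x d (X - Cset T x d i))"
proof -
  let ?A = "Aset T x"
  let ?Ci = "Cset T x d i"
  let ?C0 = "Cset T x d 0"
  let ?I = "T \<inter> Tup T x"
  have XA: "X \<subseteq> power_set ?A d" and tX: "tilable T d (power_set ?A d - X)"
    using assms(5) unfolding hole_def by auto
  have CiA: "?Ci \<subseteq> power_set ?A d" "?C0 \<subseteq> power_set ?A d"
    using Pset_sub unfolding Cset_Pset by blast+
  have dag: "dagger T x d (X - ?Ci) = ext (X - ?Ci) (Cdown T x) \<union> ext ?C0 (Cup T x)"
    unfolding dagger_def Cset_top ext_def by blast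
  have sub: "dagger T x d (X - ?Ci) \<subseteq> power_set ?A (Suc d)"
    unfolding dag using XA CiA
    by (auto simp: mem_ext mem_power_set_Suc Aset_def Cup_def Cdown_def)
  have Z: "power_set ?A (Suc d) - dagger T x d (X - ?Ci) =
      ext ?Ci ((\<lambda>t. t + 0) ` T) \<union> ext (power_set ?A d - ?Ci) ?I \<union>
      ext (power_set ?A d - X) (Cdown T x) \<union> ext (power_set ?A d - ?C0) (Cup T x)"
    unfolding dag using XA CiA assms(7)
    by (auto simp: mem_ext mem_power_set_Suc Aset_def Cup_def Cdown_def)
  have len: "\<forall>p\<in>?Ci. length p = d" unfolding Cset_def by auto
  have t1: "tilable T (Suc d) (ext ?Ci ((\<lambda>t. t + 0) ` T))" by (rule ext_col[OF len])
  have t2: "tilable T (Suc d) (ext (power_set ?A d - ?Ci) ?I)"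
    by (rule ext_layer) (use Pset_hole[of T d x "\<lambda>k. Suc k = i"] in \<open>simp add: Cset_Pset\<close>)
  have t3: "tilable T (Suc d) (ext (power_set ?A d - X) (Cdown T x))"
    by (rule ext_layer[OF tX])
  have t4: "tilable T (Suc d) (ext (power_set ?A d - ?C0) (Cup T x))"
    by (rule ext_layer) (use Pset_hole[of T d x "\<lambda>k. Suc k = 0"] in \<open>simp add: Cset_Pset\<close>)
  have "tilable T (Suc d) (ext ?Ci ((\<lambda>t. t + 0) ` T) \<union> ext (power_set ?A d - ?Ci) ?I \<union>
      ext (power_set ?A d - X) (Cdown T x) \<union> ext (power_set ?A d - ?C0) (Cup T x))"
  proof (intro tilable_Un t1 t2 t3 t4)
    show "ext ?Ci ((\<lambda>t. t + 0) ` T) \<inter> ext (power_set ?A d - ?Ci) ?I = {}"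
      by (auto simp: mem_ext)
    show "(ext ?Ci ((\<lambda>t. t + 0) ` T) \<union> ext (power_set ?A d - ?Ci) ?I) \<inter>
        ext (power_set ?A d - X) (Cdown T x) = {}"
      using assms(7) by (auto simp: mem_ext Cdown_def)
    show "(ext ?Ci ((\<lambda>t. t + 0) ` T) \<union> ext (power_set ?A d - ?Ci) ?I \<union>
        ext (power_set ?A d - X) (Cdown T x)) \<inter> ext (power_set ?A d - ?C0) (Cup T x) = {}"
      by (auto simp: mem_ext Cdown_def Cup_def)
  qed
  then show ?thesis unfolding hole_def using sub Z by simp
qed

end
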